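(* Let $Q\in\mathbb{R}^{n\times n}$ be symmetric nonsingular with eigenvalues $\lambda_1\ge\dots\ge\lambda_{n-1}>0>\lambda_n$ and orthonormal eigenvectors $u_1,\dots,u_n$ ($Qu_i=\lambda_iu_i$), let $\mathcal{C_L}=\{x: x^TQx\le0,\ x^TQu_n\le0\}$, and let $A\in\mathbb{R}^{n\times n}$. Then $\mathcal{C_L}$ (equivalently, $-\mathcal{C_L}$) is an invariant set for the continuous system $\dot x(t)=Ax(t)$ (i.e., $e^{At}\mathcal{C_L}\subseteq\mathcal{C_L}$ for all $t\ge0$) if and only if there exists $\eta\in\mathbb{R}$ such that $A^TQ+QA-\eta Q\preceq0$.
   Context: $\preceq0$ denotes negative semidefiniteness. *)

theory Defs
  imports "HOL-Analysis.Analysis"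
begin

text \<open>Matrix power with respect to the matrix product (not the componentwise product).\<close>
fun mat_pow :: "real^'n^'n \<Rightarrow> nat \<Rightarrow> real^'n^'n" where
  "mat_pow A 0 = mat 1"
| "mat_pow A (Suc k) = A ** mat_pow A k"

definition mat_exp :: "real^'n^'n \<Rightarrow> real^'n^'n" where
  "mat_exp M = (\<Sum>k. (1 / fact k) *\<^sub>R mat_pow M k)"

definition neg_semidef :: "real^'n^'n \<Rightarrow> bool" where
  "neg_semidef M \<longleftrightarrow> transpose M = M \<and> (\<forall>x. x \<bullet> (M *v x) \<le> 0)"

definition lorentz_cone :: "real^'n^'n \<Rightarrow> real^'n \<Rightarrow> (real^'n) set" where
  "lorentz_cone Q un = {x. x \<bullet> (Q *v x) \<le> 0 \<and> x \<bullet> (Q *v un) \<le> 0}"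

end

theory Submission
  imports Defs
begin
lemma mat_pow_scaleR: "mat_pow (t *\<^sub>R A) k = (t^k) *\<^sub>R mat_pow A k"
  by (induction k) (simp_all add: matrix_scalar_ac scalar_matrix_assoc[symmetric])

lemma mat_pow_vec_bound:
  fixes A :: "real^'n^'n"
  obtains K where "K > 0" "\<And>k y. norm (mat_pow A k *v y) \<le> K^k * norm y"
proof -
  obtain K where K: "K > 0" "\<And>y. norm (A *v y) \<le> norm y * K"
    using bounded_linear.pos_bounded[OF matrix_vector_mul_bounded_linear[of A]] by blast
  have "norm (mat_pow A k *v y) \<le> K^k * norm y" for k y
  proof (induction k)
    case 0 then show ?case by simp
  next
    case (Suc k)
    have "norm (mat_pow A (Suc k) *v y) = norm (A *v (mat_pow A k *v y))"
      by (simp add: matrix_vector_mul_assoc)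
    also have "\<dots> \<le> norm (mat_pow A k *v y) * K" using K by blast
    also have "\<dots> \<le> K^k * norm y * K" using Suc K(1) by (simp add: mult_right_mono)
    finally show ?case by (simp add: algebra_simps)
  qed
  then show ?thesis using K that by blast
qed

lemma norm_mat_le_cols:
  fixes M :: "real^'n^'m"
  assumes "\<And>j. norm (M *v axis j 1) \<le> B"
  shows "norm M \<le> real CARD('m) * real CARD('n) * B"
proof -
  have e: "\<bar>M $ i $ j\<bar> \<le> B" for i j
  proof -
    have "M $ i $ j = (M *v axis j 1) $ i"
      by (simp add: matrix_vector_mult_basis column_def)
    then show ?thesis using component_le_norm_cart[of "M *v axis j 1" i] assms[of j] by simp
  qed
  have r: "norm (M $ i) \<le> real CARD('n) * B" for i
  proof -
    have "norm (M $ i) \<le> (\<Sum>j\<in>UNIV. \<bar>M $ i $ j\<bar>)" by (rule norm_le_l1_cart)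
    also have "\<dots> \<le> (\<Sum>j\<in>(UNIV::'n set). B)" by (rule sum_mono) (use e in auto)
    finally show ?thesis by simp
  qed
  have "norm M \<le> (\<Sum>i\<in>UNIV. norm (M $ i))" unfolding norm_vec_def by (rule L2_set_le_sum) simp
  also have "\<dots> \<le> (\<Sum>i\<in>(UNIV::'m set). real CARD('n) * B)" by (rule sum_mono) (use r in auto)
  finally show ?thesis by simp
qed
lemma "True" by simp


lemma mat_pow_norm_bound:
  fixes M :: "real^'n^'n"
  obtains C K where "C \<ge> 0" "K > 0" "\<And>k. norm (mat_pow M k) \<le> C * K^k"
proof -
  obtain K where K: "K > 0" "\<And>k y. norm (mat_pow M k *v y) \<le> K^k * norm y"
    using mat_pow_vec_bound by blast
  have "norm (mat_pow M k) \<le> real CARD('n) * real CARD('n) * K^k" for k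
    by (rule norm_mat_le_cols) (metis K(2) norm_axis_1 mult.right_neutral)
  then show ?thesis using that[of "real CARD('n) * real CARD('n)" K] K(1) by simp
qed

lemma summable_mat_exp: "summable (\<lambda>k. (1 / fact k) *\<^sub>R mat_pow (M::real^'n^'n) k)"
proof -
  obtain C K where CK: "C \<ge> 0" "K > 0" "\<And>k. norm (mat_pow M k) \<le> C * K^k"
    using mat_pow_norm_bound by blast
  have s: "summable (\<lambda>k. C * (inverse (fact k) * K^k))"
    by (intro summable_mult summable_exp)
  show ?thesis
  proof (rule summable_comparison_test'[OF s])
    fix k assume "k \<ge> (0::nat)"
    have "norm ((1 / fact k) *\<^sub>R mat_pow M k) = inverse (fact k) * norm (mat_pow M k)"
      by (simp add: field_simps)
    also have "\<dots> \<le> inverse (fact k) * (C * K^k)" using CK(3)[of k] by (simp add: mult_left_mono)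
    finally show "norm ((1 / fact k) *\<^sub>R mat_pow M k) \<le> C * (inverse (fact k) * K^k)" by (simp add: algebra_simps)
  qed
qed

lemma bl_apply_inner: "bounded_linear (\<lambda>M::real^'n^'m. (M *v x) \<bullet> w)"
proof -
  have "linear (\<lambda>M::real^'n^'m. (M *v x) \<bullet> w)"
    by (rule linearI) (simp_all add: matrix_vector_mult_add_rdistrib inner_add_left
          scaleR_matrix_vector_assoc[symmetric])
  then show ?thesis by (simp add: linear_conv_bounded_linear)
qed

lemma mat_exp_inner:
  fixes A :: "real^'n^'n"
  shows "(\<lambda>k. ((mat_pow A k *v x) \<bullet> w / fact k) * t^k) sums ((mat_exp (t *\<^sub>R A) *v x) \<bullet> w)"
proof -
  have "(\<lambda>k. (((1 / fact k) *\<^sub>R mat_pow (t *\<^sub>R A) k) *v x) \<bullet> w) sums ((mat_exp (t *\<^sub>R A) *v x) \<bullet> w)"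
    unfolding mat_exp_def
    by (rule bounded_linear.sums[OF bl_apply_inner]) (rule summable_sums[OF summable_mat_exp])
  moreover have "(((1 / fact k) *\<^sub>R mat_pow (t *\<^sub>R A) k) *v x) \<bullet> w = ((mat_pow A k *v x) \<bullet> w / fact k) * t^k" for k
    by (simp add: mat_pow_scaleR scaleR_matrix_vector_assoc[symmetric])
  ultimately show ?thesis by simp
qed

lemma mv_inner_transpose: "((A::real^'n^'m) *v y) \<bullet> w = y \<bullet> (transpose A *v w)"
  by (metis dot_lmul_matrix inner_commute transpose_matrix_vector)

lemma mat_exp_deriv_inner:
  fixes A :: "real^'n^'n"
  shows "((\<lambda>t. (mat_exp (t *\<^sub>R A) *v x) \<bullet> w) has_real_derivative
            ((A *v (mat_exp (t *\<^sub>R A) *v x)) \<bullet> w)) (at t)"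
proof -
  define c where "c k = (mat_pow A k *v x) \<bullet> w / fact k" for k
  have f: "(\<lambda>t. (mat_exp (t *\<^sub>R A) *v x) \<bullet> w) = (\<lambda>t. \<Sum>k. c k * t^k)"
    using mat_exp_inner[of A x w] unfolding c_def by (auto simp: sums_iff)
  have s: "summable (\<lambda>k. c k * y^k)" for y
    using mat_exp_inner[of A x w y] unfolding c_def by (auto simp: sums_iff)
  have d: "diffs c k = (mat_pow A k *v x) \<bullet> (transpose A *v w) / fact k" for k
  proof -
    have "diffs c k = of_nat (Suc k) * ((mat_pow A (Suc k) *v x) \<bullet> w / fact (Suc k))"
      by (simp add: diffs_def c_def)
    also have "\<dots> = (mat_pow A (Suc k) *v x) \<bullet> w / fact k"
      by (simp add: fact_Suc del: of_nat_Suc)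
    also have "(mat_pow A (Suc k) *v x) \<bullet> w = (mat_pow A k *v x) \<bullet> (transpose A *v w)"
      by (simp add: matrix_vector_mul_assoc[symmetric] mv_inner_transpose)
    finally show ?thesis .
  qed
  have "(\<Sum>k. diffs c k * t^k) = (mat_exp (t *\<^sub>R A) *v x) \<bullet> (transpose A *v w)"
    using mat_exp_inner[of A x "transpose A *v w" t] unfolding d by (simp add: sums_iff)
  also have "\<dots> = (A *v (mat_exp (t *\<^sub>R A) *v x)) \<bullet> w"
    by (simp add: mv_inner_transpose)
  finally have e: "(\<Sum>k. diffs c k * t^k) = (A *v (mat_exp (t *\<^sub>R A) *v x)) \<bullet> w" .
  show ?thesis unfolding f e[symmetric]
    by (rule termdiffs_strong_converges_everywhere) (rule s)
qed

lemma mat_exp_vderiv: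
  fixes A :: "real^'n^'n"
  shows "((\<lambda>t. mat_exp (t *\<^sub>R A) *v x) has_vector_derivative (A *v (mat_exp (t *\<^sub>R A) *v x))) (at t)"
  unfolding has_vector_derivative_def
  apply (subst has_derivative_componentwise_within)
proof
  fix i :: "real^'n"
  let ?c = "(A *v (mat_exp (t *\<^sub>R A) *v x)) \<bullet> i"
  have e: "(\<lambda>h. (h *\<^sub>R (A *v (mat_exp (t *\<^sub>R A) *v x))) \<bullet> i) = (*) ?c"
    by (auto simp: fun_eq_iff)
  show "((\<lambda>t. (mat_exp (t *\<^sub>R A) *v x) \<bullet> i) has_derivative
         (\<lambda>h. (h *\<^sub>R (A *v (mat_exp (t *\<^sub>R A) *v x))) \<bullet> i)) (at t)"
    unfolding e using mat_exp_deriv_inner[of A x i t] by (simp add: has_field_derivative_def)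
qed

lemma on_expand:
  fixes u :: "'n::finite \<Rightarrow> real^'n"
  assumes on: "\<And>i j. u i \<bullet> u j = (if i = j then 1 else 0)"
  shows "x = (\<Sum>i\<in>UNIV. (x \<bullet> u i) *\<^sub>R u i)"
proof -
  have inj: "inj u"
  proof (rule injI)
    fix i j assume "u i = u j"
    then have "u i \<bullet> u j = 1" using on[of j j] by simp
    then show "i = j" using on[of i j] by (auto split: if_splits)
  qed
  have po: "pairwise orthogonal (range u)"
    unfolding pairwise_def orthogonal_def using on by (auto)
  have nz: "0 \<notin> range u" using on by (metis image_iff inner_zero_left zero_neq_one)
  have ind: "independent (range u)" by (rule pairwise_orthogonal_independent[OF po nz])
  have cardu: "card (range u) = CARD('n)" using inj by (simp add: card_image)
  have sp: "UNIV \<subseteq> span (range u)"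
    by (rule card_ge_dim_independent[OF _ ind]) (simp_all add: cardu)
  define y where "y = x - (\<Sum>i\<in>UNIV. (x \<bullet> u i) *\<^sub>R u i)"
  have yu: "y \<bullet> u j = 0" for j
  proof -
    have "(\<Sum>i\<in>UNIV. (x \<bullet> u i) *\<^sub>R u i) \<bullet> u j = (\<Sum>i\<in>UNIV. (x \<bullet> u i) * (u i \<bullet> u j))"
      by (simp add: inner_sum_left)
    also have "\<dots> = (\<Sum>i\<in>UNIV. if i = j then x \<bullet> u i else 0)" by (rule sum.cong) (simp_all add: on)
    also have "\<dots> = x \<bullet> u j" by simp
    finally show ?thesis by (simp add: y_def inner_diff_left)
  qed
  have "orthogonal y y"
    by (rule orthogonal_to_span[of y "range u"]) (use sp yu in \<open>auto simp: orthogonal_def\<close>)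
  then have "y = 0" by (simp add: orthogonal_self)
  then show ?thesis by (simp add: y_def)
qed

lemma quad_expand:
  fixes u :: "'n::finite \<Rightarrow> real^'n" and Q :: "real^'n^'n"
  assumes on: "\<And>i j. u i \<bullet> u j = (if i = j then 1 else 0)"
    and eigen: "\<And>i. Q *v u i = lam i *\<^sub>R u i"
  shows "x \<bullet> (Q *v x) = (\<Sum>i\<in>UNIV. lam i * (x \<bullet> u i)^2)"
proof -
  have "Q *v x = Q *v (\<Sum>i\<in>UNIV. (x \<bullet> u i) *\<^sub>R u i)" using on_expand[OF on, of x] by simp
  also have "\<dots> = (\<Sum>i\<in>UNIV. (x \<bullet> u i) *\<^sub>R (lam i *\<^sub>R u i))"
    by (simp add: linear_sum[OF matrix_vector_mul_linear] o_def matrix_vector_mult_scaleR eigen)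
  finally have "x \<bullet> (Q *v x) = (\<Sum>i\<in>UNIV. (x \<bullet> u i) * lam i * (x \<bullet> u i))"
    by (simp add: inner_sum_right mult.assoc)
  then show ?thesis by (simp add: power2_eq_square mult_ac)
qed

lemma quad_sep:
  fixes q0 q1 q2 r0 r1 r2 :: real
  assumes "q0 > 0" "q2 < 0" "r0 > 0" "r2 > 0"
    and H: "\<And>t. q0 + q1 * t + q2 * t^2 = 0 \<Longrightarrow> r0 + r1 * t + r2 * t^2 \<le> 0"
  shows False
proof -
  define D where "D = q1^2 - 4 * q0 * q2"
  have D: "D > q1^2" using assms(1,2) unfolding D_def by (simp add: mult_pos_neg)
  define s where "s = sqrt D"
  have D0: "D \<ge> 0" using D zero_le_power2[of q1] by linarith
  have s2: "s^2 = D" using D0 unfolding s_def by simp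
  have sgt: "s > \<bar>q1\<bar>" unfolding s_def using D
    by (metis abs_ge_zero real_sqrt_abs real_sqrt_less_mono)
  define t1 where "t1 = (- q1 + s) / (2 * q2)"
  define t2 where "t2 = (- q1 - s) / (2 * q2)"
  have t1: "t1 < 0" unfolding t1_def using sgt assms(2) by (auto simp: divide_pos_neg)
  have t2: "t2 > 0" unfolding t2_def using sgt assms(2) by (auto simp: divide_neg_neg)
  have r1: "q0 + q1 * t1 + q2 * t1^2 = 0"
    unfolding t1_def using assms(2) s2 unfolding D_def by (simp add: field_simps power2_eq_square) algebra
  have r2: "q0 + q1 * t2 + q2 * t2^2 = 0"
    unfolding t2_def using assms(2) s2 unfolding D_def by (simp add: field_simps power2_eq_square) algebra
  have a: "r0 + r1 * t1 + r2 * t1^2 \<le> 0" by (rule H[OF r1])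
  have b: "r0 + r1 * t2 + r2 * t2^2 \<le> 0" by (rule H[OF r2])
  have "t2 * (r0 + r1 * t1 + r2 * t1^2) - t1 * (r0 + r1 * t2 + r2 * t2^2) = (t2 - t1) * (r0 - r2 * t1 * t2)"
    by (simp add: algebra_simps power2_eq_square)
  moreover have "t2 * (r0 + r1 * t1 + r2 * t1^2) \<le> 0" using a t2 by (simp add: mult_nonneg_nonpos)
  moreover have "- t1 * (r0 + r1 * t2 + r2 * t2^2) \<le> 0" using b t1 by (simp add: mult_nonpos_nonpos)
  moreover have "(t2 - t1) * (r0 - r2 * t1 * t2) > 0"
  proof -
    have "r2 * t1 * t2 < 0" using t1 t2 assms(4) by (simp add: mult_pos_neg mult_neg_pos)
    then show ?thesis using t1 t2 assms(3) by simp
  qed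
  ultimately show False by linarith
qed

lemma quad_form_line:
  fixes Q :: "real^'n^'n"
  shows "(x + t *\<^sub>R y) \<bullet> (Q *v (x + t *\<^sub>R y)) =
     x \<bullet> (Q *v x) + (x \<bullet> (Q *v y) + y \<bullet> (Q *v x)) * t + (y \<bullet> (Q *v y)) * t^2"
  by (simp add: matrix_vector_right_distrib matrix_vector_mult_scaleR inner_add_left inner_add_right
      algebra_simps power2_eq_square)

lemma S_ratio:
  fixes Q M :: "real^'n^'n"
  assumes H: "\<And>z. z \<bullet> (Q *v z) = 0 \<Longrightarrow> z \<bullet> (M *v z) \<le> 0"
    and qx: "x \<bullet> (Q *v x) > 0" and qy: "y \<bullet> (Q *v y) < 0"
  shows "x \<bullet> (M *v x) / (x \<bullet> (Q *v x)) \<le> y \<bullet> (M *v y) / (y \<bullet> (Q *v y))"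
proof (rule ccontr)
  let ?a = "x \<bullet> (M *v x) / (x \<bullet> (Q *v x))" and ?b = "y \<bullet> (M *v y) / (y \<bullet> (Q *v y))"
  assume "\<not> ?a \<le> ?b"
  then have ab: "?b < ?a" by simp
  define a where "a = ?a"
  define b where "b = ?b"
  define g where "g = (a + b) / 2"
  have g1: "g < ?a" using ab unfolding g_def a_def[symmetric] b_def[symmetric] by (simp add: field_simps)
  have g2: "?b < g" using ab unfolding g_def a_def[symmetric] b_def[symmetric] by (simp add: field_simps)
  have r0: "x \<bullet> (M *v x) - g * (x \<bullet> (Q *v x)) > 0"
    using g1 qx by (simp add: field_simps)
  have r2: "y \<bullet> (M *v y) - g * (y \<bullet> (Q *v y)) > 0"
    using g2 qy by (simp add: field_simps)
  show False
  proof (rule quad_sep[OF qx _ r0 r2])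
    show "y \<bullet> (Q *v y) < 0" by (rule qy)
    fix t
    assume "x \<bullet> (Q *v x) + (x \<bullet> (Q *v y) + y \<bullet> (Q *v x)) * t + y \<bullet> (Q *v y) * t\<^sup>2 = 0"
    then have q0: "(x + t *\<^sub>R y) \<bullet> (Q *v (x + t *\<^sub>R y)) = 0" by (simp add: quad_form_line)
    have "(x + t *\<^sub>R y) \<bullet> (M *v (x + t *\<^sub>R y)) \<le> 0" by (rule H[OF q0])
    then have "x \<bullet> (M *v x) + (x \<bullet> (M *v y) + y \<bullet> (M *v x)) * t + (y \<bullet> (M *v y)) * t^2 \<le> 0"
      by (simp add: quad_form_line)
    moreover have "x \<bullet> (M *v x) - g * (x \<bullet> (Q *v x)) +
        ((x \<bullet> (M *v y) + y \<bullet> (M *v x)) - g * (x \<bullet> (Q *v y) + y \<bullet> (Q *v x))) * t +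
        (y \<bullet> (M *v y) - g * (y \<bullet> (Q *v y))) * t\<^sup>2 =
        (x \<bullet> (M *v x) + (x \<bullet> (M *v y) + y \<bullet> (M *v x)) * t + (y \<bullet> (M *v y)) * t^2)
        - g * (x \<bullet> (Q *v x) + (x \<bullet> (Q *v y) + y \<bullet> (Q *v x)) * t + y \<bullet> (Q *v y) * t\<^sup>2)"
      by (simp add: algebra_simps)
    ultimately show "x \<bullet> (M *v x) - g * (x \<bullet> (Q *v x)) +
        ((x \<bullet> (M *v y) + y \<bullet> (M *v x)) - g * (x \<bullet> (Q *v y) + y \<bullet> (Q *v x))) * t +
        (y \<bullet> (M *v y) - g * (y \<bullet> (Q *v y))) * t\<^sup>2 \<le> 0"
      using \<open>x \<bullet> (Q *v x) + (x \<bullet> (Q *v y) + y \<bullet> (Q *v x)) * t + y \<bullet> (Q *v y) * t\<^sup>2 = 0\<close> by simp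
  qed
qed

lemma transpose_add': "transpose ((X::real^'n^'m) + Y) = transpose X + transpose Y"
  by (simp add: transpose_def vec_eq_iff)
lemma transpose_diff': "transpose ((X::real^'n^'m) - Y) = transpose X - transpose Y"
  by (simp add: transpose_def vec_eq_iff)

lemma inner_quad_deriv:
  fixes B :: "real^'n^'n"
  assumes "(v has_vector_derivative v') (at t)"
  shows "((\<lambda>s. v s \<bullet> (B *v v s)) has_real_derivative (v t \<bullet> (B *v v') + v' \<bullet> (B *v v t))) (at t)"
  unfolding has_real_derivative_iff_has_vector_derivative
  by (rule bounded_bilinear.has_vector_derivative[OF bounded_bilinear_inner assms
        bounded_linear.has_vector_derivative[OF matrix_vector_mul_bounded_linear assms]])

lemma mat_exp_zero_apply: "mat_exp (0 *\<^sub>R (A::real^'n^'n)) *v x = x"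
proof -
  have "(mat_exp (0 *\<^sub>R A) *v x) \<bullet> w = x \<bullet> w" for w
  proof -
    have "(\<lambda>k. ((mat_pow A k *v x) \<bullet> w / fact k) * 0^k) sums ((mat_exp (0 *\<^sub>R A) *v x) \<bullet> w)"
      by (rule mat_exp_inner)
    then have "(mat_exp (0 *\<^sub>R A) *v x) \<bullet> w = (\<Sum>k. ((mat_pow A k *v x) \<bullet> w / fact k) * 0^k)"
      by (simp add: sums_iff)
    also have "\<dots> = x \<bullet> w" by (subst powser_zero) simp
    finally show ?thesis .
  qed
  then have "(mat_exp (0 *\<^sub>R A) *v x - x) \<bullet> (mat_exp (0 *\<^sub>R A) *v x - x) = 0"
    by (simp only: inner_diff_left)
  then show ?thesis by simp
qed

lemma quad_deriv_E:
  fixes A Q :: "real^'n^'n"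
  shows "((\<lambda>s. (mat_exp (s *\<^sub>R A) *v x) \<bullet> (Q *v (mat_exp (s *\<^sub>R A) *v x))) has_real_derivative
     ((mat_exp (t *\<^sub>R A) *v x) \<bullet> ((transpose A ** Q + Q ** A) *v (mat_exp (t *\<^sub>R A) *v x)))) (at t)"
proof -
  let ?v = "mat_exp (t *\<^sub>R A) *v x"
  have "?v \<bullet> (Q *v (A *v ?v)) + (A *v ?v) \<bullet> (Q *v ?v) = ?v \<bullet> ((transpose A ** Q + Q ** A) *v ?v)"
    by (simp add: matrix_vector_mult_add_rdistrib inner_add_right matrix_vector_mul_assoc[symmetric]
        mv_inner_transpose)
  then show ?thesis
    using inner_quad_deriv[OF mat_exp_vderiv[of A x t], of Q] by simp
qed

lemma expdecay_deriv:
  assumes "(g has_real_derivative g') (at t)"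
  shows "((\<lambda>s. exp (c * s) * g s) has_real_derivative (exp (c * t) * (g' + c * g t))) (at t)"
proof -
  have "((\<lambda>s. exp (c * s)) has_real_derivative exp (c * t) * c) (at t)"
    using DERIV_fun_exp[OF DERIV_cmult_Id[of c t UNIV]] by simp
  from DERIV_mult'[OF this assms]
  have "((\<lambda>s. exp (c * s) * g s) has_real_derivative (exp (c * t) * g' + exp (c * t) * c * g t)) (at t)" .
  then show ?thesis by (simp add: algebra_simps)
qed

lemma mat_exp_stays_zero:
  fixes A :: "real^'n^'n"
  assumes z: "mat_exp (s0 *\<^sub>R A) *v x = 0" and st: "s0 \<le> t"
  shows "mat_exp (t *\<^sub>R A) *v x = 0"
proof -
  obtain K where K: "K > 0" "\<And>y. norm (A *v y) \<le> norm y * K"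
    using bounded_linear.pos_bounded[OF matrix_vector_mul_bounded_linear[of A]] by blast
  define v where "v s = mat_exp (s *\<^sub>R A) *v x" for s
  define e where "e s = exp ((-2*K) * s) * (v s \<bullet> (mat 1 *v v s))" for s
  have d: "(e has_real_derivative exp ((-2*K) * s) * ((v s \<bullet> (mat 1 *v (A *v v s)) + (A *v v s) \<bullet> (mat 1 *v v s))
           + (-2*K) * (v s \<bullet> (mat 1 *v v s)))) (at s)" for s
    unfolding e_def
    by (rule expdecay_deriv, unfold v_def, rule inner_quad_deriv[OF mat_exp_vderiv])
  have nonpos: "(v s \<bullet> (mat 1 *v (A *v v s)) + (A *v v s) \<bullet> (mat 1 *v v s))
           + (-2*K) * (v s \<bullet> (mat 1 *v v s)) \<le> 0" for s
  proof -
    have "v s \<bullet> (A *v v s) \<le> norm (v s) * norm (A *v v s)" by (rule norm_cauchy_schwarz)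
    also have "\<dots> \<le> norm (v s) * (norm (v s) * K)" by (rule mult_left_mono[OF K(2)]) simp
    finally have "v s \<bullet> (A *v v s) \<le> K * (v s \<bullet> v s)"
      by (simp add: power2_norm_eq_inner[symmetric] power2_eq_square algebra_simps)
    then show ?thesis by (simp add: inner_commute)
  qed
  have "e t \<le> e s0"
  proof (rule DERIV_nonpos_imp_nonincreasing[OF st])
    fix s
    show "\<exists>y. (e has_real_derivative y) (at s) \<and> y \<le> 0"
      using d[of s] nonpos[of s] by (intro exI conjI) (auto intro!: mult_nonneg_nonpos)
  qed
  moreover have "e s0 = 0" unfolding e_def using z v_def by simp
  ultimately have "exp ((-2*K) * t) * (v t \<bullet> v t) \<le> 0" unfolding e_def by simp
  then have "v t \<bullet> v t \<le> 0" by (simp add: mult_le_0_iff)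
  then show ?thesis unfolding v_def using inner_ge_zero[of "v t"] v_def by (metis antisym inner_eq_zero_iff)
qed

lemma mv_neg: "(B::real^'n^'m) *v (- z) = - (B *v z)"
  by (metis matrix_vector_mult_scaleR scaleR_minus1_left)

theorem theorem3p21:
  fixes Q A :: "real^'n^'n"
    and u :: "'n \<Rightarrow> real^'n"
    and lam :: "'n \<Rightarrow> real"
    and m :: 'n
  assumes symQ: "transpose Q = Q"
    and nonsing: "invertible Q"
    and orthonormal: "\<And>i j. u i \<bullet> u j = (if i = j then 1 else 0)"
    and eigen: "\<And>i. Q *v u i = lam i *\<^sub>R u i"
    and neg: "lam m < 0"
    and pos: "\<And>i. i \<noteq> m \<Longrightarrow> lam i > 0"
  shows "(\<forall>t\<ge>0. (\<lambda>x. mat_exp (t *\<^sub>R A) *v x) ` lorentz_cone Q (u m) \<subseteq> lorentz_cone Q (u m))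
     \<longleftrightarrow> (\<exists>\<eta>::real. neg_semidef (transpose A ** Q + Q ** A - \<eta> *\<^sub>R Q))"
proof -
  define M where "M = transpose A ** Q + Q ** A"
  have qexp: "\<And>x. x \<bullet> (Q *v x) = (\<Sum>i\<in>UNIV. lam i * (x \<bullet> u i)^2)"
    by (rule quad_expand[OF orthonormal eigen])
  have Qum: "\<And>x. x \<bullet> (Q *v u m) = lam m * (x \<bullet> u m)" by (simp add: eigen)
  have qu: "\<And>i. u i \<bullet> (Q *v u i) = lam i" by (simp add: eigen orthonormal)
  have cone: "\<And>x. x \<in> lorentz_cone Q (u m) \<longleftrightarrow> x \<bullet> (Q *v x) \<le> 0 \<and> x \<bullet> u m \<ge> 0"
    unfolding lorentz_cone_def using neg by (auto simp: Qum mult_le_0_iff)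
  have zero: "x = 0" if a: "x \<bullet> (Q *v x) \<le> 0" "x \<bullet> u m = 0" for x
  proof -
    have nn: "\<forall>i\<in>UNIV. 0 \<le> lam i * (x \<bullet> u i)^2"
    proof
      fix i show "0 \<le> lam i * (x \<bullet> u i)^2"
        using pos[of i] a(2) by (cases "i = m") auto
    qed
    have "0 \<le> (\<Sum>i\<in>UNIV. lam i * (x \<bullet> u i)^2)" by (rule sum_nonneg) (use nn in auto)
    then have "(\<Sum>i\<in>UNIV. lam i * (x \<bullet> u i)^2) = 0"
      using a(1) qexp[of x] by linarith
    then have "\<forall>i\<in>UNIV. lam i * (x \<bullet> u i)^2 = 0" using sum_nonneg_eq_0_iff[of UNIV "\<lambda>i. lam i * (x \<bullet> u i)^2"] nn by simp
    then have z: "lam i * (x \<bullet> u i)^2 = 0" for i by simp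
    have c0: "x \<bullet> u i = 0" for i
    proof (cases "i = m")
      case True then show ?thesis using a(2) by simp
    next
      case False then have "lam i \<noteq> 0" using pos[of i] by simp
      then show ?thesis using z[of i] by simp
    qed
    show ?thesis using on_expand[OF orthonormal, of x] by (simp add: c0)
  qed
  have symN: "transpose (M - e *\<^sub>R Q) = M - e *\<^sub>R Q" for e
    unfolding M_def by (simp add: transpose_add' transpose_diff' transpose_scalar matrix_transpose_mul symQ)
  have quadN: "x \<bullet> ((M - e *\<^sub>R Q) *v x) = x \<bullet> (M *v x) - e * (x \<bullet> (Q *v x))" for x e
    by (simp add: matrix_vector_mult_diff_rdistrib scaleR_matrix_vector_assoc[symmetric] inner_diff_right)
  show ?thesis unfolding M_def[symmetric]
  proof
    assume inv: "\<forall>t\<ge>0. (\<lambda>x. mat_exp (t *\<^sub>R A) *v x) ` lorentz_cone Q (u m) \<subseteq> lorentz_cone Q (u m)"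
    have H: "z \<bullet> (M *v z) \<le> 0" if qz: "z \<bullet> (Q *v z) = 0" for z
    proof -
      obtain w where w: "w \<in> lorentz_cone Q (u m)" "w \<bullet> (M *v w) = z \<bullet> (M *v z)" "w \<bullet> (Q *v w) = 0"
      proof (cases "z \<bullet> u m \<ge> 0")
        case True show ?thesis by (rule that[of z]) (use True qz in \<open>simp_all add: cone\<close>)
      next
        case False show ?thesis by (rule that[of "-z"]) (use False qz in \<open>simp_all add: cone mv_neg\<close>)
      qed
      show ?thesis
      proof (rule ccontr)
        assume "\<not> ?thesis"
        then have p: "w \<bullet> (M *v w) > 0" using w(2) by simp
        define f where "f s = (mat_exp (s *\<^sub>R A) *v w) \<bullet> (Q *v (mat_exp (s *\<^sub>R A) *v w))" for s
        have "(f has_real_derivative w \<bullet> (M *v w)) (at 0)"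
          using quad_deriv_E[of A w Q 0] unfolding f_def M_def mat_exp_zero_apply by simp
        from DERIV_pos_inc_right[OF this p] obtain d where d: "d > 0" "\<forall>h>0. h < d \<longrightarrow> f 0 < f (0 + h)"
          by blast
        then have "f 0 < f (d/2)" by auto
        moreover have "f 0 = 0" unfolding f_def mat_exp_zero_apply using w(3) by simp
        moreover have "f (d/2) \<le> 0"
        proof -
          have "mat_exp ((d/2) *\<^sub>R A) *v w \<in> lorentz_cone Q (u m)"
          proof -
            have "(\<lambda>x. mat_exp ((d/2) *\<^sub>R A) *v x) ` lorentz_cone Q (u m) \<subseteq> lorentz_cone Q (u m)"
              using inv d(1) by simp
            then show ?thesis using w(1) by blast
          qed
          then show ?thesis unfolding f_def cone by simp
        qed
        ultimately show False by simp
      qed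
    qed
    show "\<exists>\<eta>. neg_semidef (M - \<eta> *\<^sub>R Q)"
    proof (cases "\<exists>i. i \<noteq> m")
      case True
      then obtain i where i: "i \<noteq> m" by blast
      define S where "S = {x \<bullet> (M *v x) / (x \<bullet> (Q *v x)) | x. x \<bullet> (Q *v x) > 0}"
      have qm: "u m \<bullet> (Q *v u m) < 0" using qu neg by simp
      have "u i \<bullet> (M *v u i) / (u i \<bullet> (Q *v u i)) \<in> S" unfolding S_def mem_Collect_eq using qu[of i] pos[OF i] by (intro exI[of _ "u i"]) simp
      then have Sne: "S \<noteq> {}" by blast
      have Sub: "s \<le> y \<bullet> (M *v y) / (y \<bullet> (Q *v y))" if "s \<in> S" "y \<bullet> (Q *v y) < 0" for s y
        using that S_ratio[OF H] unfolding S_def by auto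
      have bdd: "bdd_above S" by (rule bdd_aboveI) (rule Sub[OF _ qm])
      define e where "e = Sup S"
      have "neg_semidef (M - e *\<^sub>R Q)"
        unfolding neg_semidef_def
      proof (intro conjI allI)
        show "transpose (M - e *\<^sub>R Q) = M - e *\<^sub>R Q" by (rule symN)
        fix x
        have "x \<bullet> (M *v x) \<le> e * (x \<bullet> (Q *v x))"
        proof (cases "x \<bullet> (Q *v x)" "0::real" rule: linorder_cases)
          case less
          have "e \<le> x \<bullet> (M *v x) / (x \<bullet> (Q *v x))"
            unfolding e_def by (rule cSup_least[OF Sne]) (rule Sub[OF _ less])
          then show ?thesis using less by (simp add: le_divide_eq)
        next
          case equal then show ?thesis using H[of x] by simp
        next
          case greater
          have "x \<bullet> (M *v x) / (x \<bullet> (Q *v x)) \<le> e"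
            unfolding e_def by (rule cSup_upper[OF _ bdd]) (use greater in \<open>auto simp: S_def\<close>)
          then show ?thesis using greater by (simp add: divide_le_eq)
        qed
        then show "x \<bullet> ((M - e *\<^sub>R Q) *v x) \<le> 0" by (simp add: quadN)
      qed
      then show ?thesis by blast
    next
      case False
      then have U: "UNIV = {m}" by auto
      define e where "e = u m \<bullet> (M *v u m) / lam m"
      have "neg_semidef (M - e *\<^sub>R Q)"
        unfolding neg_semidef_def
      proof (intro conjI allI)
        show "transpose (M - e *\<^sub>R Q) = M - e *\<^sub>R Q" by (rule symN)
        fix x
        have xe: "x = (x \<bullet> u m) *\<^sub>R u m"
          using on_expand[OF orthonormal, of x] unfolding U by simp
        have hom: "(c *\<^sub>R y) \<bullet> (B *v (c *\<^sub>R y)) = c^2 * (y \<bullet> (B *v y))" for c y and B :: "real^'n^'n"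
          by (simp add: matrix_vector_mult_scaleR power2_eq_square)
        obtain c where xc: "x = c *\<^sub>R u m" using xe by blast
        have "x \<bullet> ((M - e *\<^sub>R Q) *v x) = c^2 * (u m \<bullet> ((M - e *\<^sub>R Q) *v u m))"
          unfolding xc by (rule hom)
        also have "\<dots> = c^2 * (u m \<bullet> (M *v u m) - e * lam m)"
          by (simp only: quadN qu)
        also have "\<dots> = 0" unfolding e_def using neg by simp
        finally show "x \<bullet> ((M - e *\<^sub>R Q) *v x) \<le> 0" by simp
      qed
      then show ?thesis by blast
    qed
  next
    assume "\<exists>\<eta>. neg_semidef (M - \<eta> *\<^sub>R Q)"
    then obtain e where N: "neg_semidef (M - e *\<^sub>R Q)" by blast
    have Nq: "x \<bullet> (M *v x) - e * (x \<bullet> (Q *v x)) \<le> 0" for x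
      using N unfolding neg_semidef_def quadN by blast
    show "\<forall>t\<ge>0. (\<lambda>x. mat_exp (t *\<^sub>R A) *v x) ` lorentz_cone Q (u m) \<subseteq> lorentz_cone Q (u m)"
    proof (intro allI impI image_subsetI)
      fix t :: real and x assume t: "t \<ge> 0" and x: "x \<in> lorentz_cone Q (u m)"
      define v where "v s = mat_exp (s *\<^sub>R A) *v x" for s
      define f where "f s = v s \<bullet> (Q *v v s)" for s
      have fd: "(f has_real_derivative v s \<bullet> (M *v v s)) (at s)" for s
        unfolding f_def v_def M_def by (rule quad_deriv_E)
      have fneg: "f s \<le> 0" if s: "s \<ge> 0" for s
      proof -
        define h where "h s = exp ((-e) * s) * f s" for s
        have hd: "(h has_real_derivative exp ((-e) * s) * (v s \<bullet> (M *v v s) + (-e) * f s)) (at s)" for s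
          unfolding h_def by (rule expdecay_deriv[OF fd])
        have "h s \<le> h 0"
        proof (rule DERIV_nonpos_imp_nonincreasing[OF s])
          fix y
          show "\<exists>d. (h has_real_derivative d) (at y) \<and> d \<le> 0"
            using hd[of y] Nq[of "v y"] unfolding f_def
            by (intro exI conjI) (auto intro!: mult_nonneg_nonpos)
        qed
        moreover have "h 0 = x \<bullet> (Q *v x)" unfolding h_def f_def v_def mat_exp_zero_apply by simp
        moreover have "x \<bullet> (Q *v x) \<le> 0" using x cone by auto
        ultimately have "exp ((-e) * s) * f s \<le> 0" unfolding h_def by simp
        then show ?thesis by (simp add: mult_le_0_iff)
      qed
      define g where "g s = v s \<bullet> u m" for s
      have gc: "isCont g s" for s
        using DERIV_isCont[OF mat_exp_deriv_inner[of A x "u m" s]] unfolding g_def v_def .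
      have "g t \<ge> 0"
      proof (rule ccontr)
        assume "\<not> g t \<ge> 0"
        then have gt: "g t \<le> 0" "g t \<noteq> 0" by auto
        have g0: "0 \<le> g 0" unfolding g_def v_def mat_exp_zero_apply using x cone by auto
        obtain s where s: "0 \<le> s" "s \<le> t" "g s = 0"
          using IVT2[of g t 0 0, OF gt(1) g0 t] gc by blast
        have "v s = 0" using zero[of "v s"] fneg[OF s(1)] s(3) unfolding f_def g_def by simp
        then have "v t = 0" unfolding v_def by (rule mat_exp_stays_zero[OF _ s(2)])
        then show False using gt unfolding g_def by simp
      qed
      then show "mat_exp (t *\<^sub>R A) *v x \<in> lorentz_cone Q (u m)"
        using fneg[OF t] unfolding cone f_def g_def v_def by simp
    qed
  qed
qed

end
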